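(* A function $f:\mathbb{N}\to\mathbb{N}$ is obliviously-computable by a leaderless CRN if and only if $f$ is semilinear and superadditive (i.e. $f(x)+f(y)\le f(x+y)$ for all $x,y\in\mathbb{N}$).
   Context: A chemical reaction network (CRN) is a pair $(\mathcal{S},\mathcal{R})$ of a finite set of species and a finite set of reactions $(\vec{R},\vec{P})\in\mathbb{N}^{\mathcal{S}}\times\mathbb{N}^{\mathcal{S}}$. A configuration is $\vec{C}\in\mathbb{N}^{\mathcal{S}}$; a reaction is applicable if $\vec{R}\le\vec{C}$ and yields $\vec{C}-\vec{R}+\vec{P}$; reachability is via finite sequences of applicable reactions. A leaderless CRN computing $f:\mathbb{N}\to\mathbb{N}$ has an input species $X$ and an output species $Y$; the initial configuration for input $x$ has $x$ copies of $X$ and zero of all other species (no leader). $\vec{C}$ is stable if all configurations reachable from it have the same count of $Y$. The CRN stably computes $f$ if for every $x$ and every $\vec{C}$ reachable from the initial configuration, some stable $\vec{O}$ reachable from $\vec{C}$ has $\vec{O}(Y)=f(x)$. It is output-oblivious if $Y$ is never a reactant. $f$ is obliviously-computable by a leaderless CRN if some leaderless output-oblivious CRN stably computes it. A set $S\subseteq\mathbb{N}^d$ is semilinear if it is a finite Boolean combination of threshold sets $\{\vec{x}:\vec{a}\cdot\vec{x}\ge b\}$ and mod sets $\{\vec{x}:\vec{a}\cdot\vec{x}\equiv b\bmod c\}$ ($\vec{a}\in\mathbb{Z}^d,b\in\mathbb{Z},c\in\mathbb{N}_+$); a function is semilinear if it is a finite union of affine partial functions with disjoint semilinear domains. *)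

theory Defs
  imports Complex_Main
begin

type_synonym config = "nat \<Rightarrow> nat"
type_synonym reaction = "config \<times> config"

definition valid_crn :: "nat set \<Rightarrow> reaction set \<Rightarrow> bool" where
  "valid_crn S R \<longleftrightarrow> finite S \<and> finite R \<and>
     (\<forall>(r, p) \<in> R. \<forall>s. s \<notin> S \<longrightarrow> r s = 0 \<and> p s = 0)"

definition crn_step :: "reaction set \<Rightarrow> config \<Rightarrow> config \<Rightarrow> bool" where
  "crn_step R C D \<longleftrightarrow> (\<exists>(r, p) \<in> R. (\<forall>s. r s \<le> C s) \<and> D = (\<lambda>s. C s - r s + p s))"

definition reachable :: "reaction set \<Rightarrow> config \<Rightarrow> config \<Rightarrow> bool" where
  "reachable R = (crn_step R)\<^sup>*\<^sup>*"

definition stable_config :: "reaction set \<Rightarrow> nat \<Rightarrow> config \<Rightarrow> bool" where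
  "stable_config R Y C \<longleftrightarrow> (\<forall>D. reachable R C D \<longrightarrow> D Y = C Y)"

text \<open>Leaderless initial configuration: x copies of X, nothing else.\<close>
definition init_config :: "nat \<Rightarrow> nat \<Rightarrow> config" where
  "init_config X x = (\<lambda>s. if s = X then x else 0)"

definition stably_computes :: "reaction set \<Rightarrow> nat \<Rightarrow> nat \<Rightarrow> (nat \<Rightarrow> nat) \<Rightarrow> bool" where
  "stably_computes R X Y f \<longleftrightarrow>
     (\<forall>x C. reachable R (init_config X x) C \<longrightarrow>
        (\<exists>Out. reachable R C Out \<and> stable_config R Y Out \<and> Out Y = f x))"

definition output_oblivious :: "reaction set \<Rightarrow> nat \<Rightarrow> bool" where
  "output_oblivious R Y \<longleftrightarrow> (\<forall>(r, p) \<in> R. r Y = 0)"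

definition obliviously_computable :: "(nat \<Rightarrow> nat) \<Rightarrow> bool" where
  "obliviously_computable f \<longleftrightarrow>
     (\<exists>S R X Y. valid_crn S R \<and> X \<in> S \<and> Y \<in> S \<and> X \<noteq> Y \<and>
        output_oblivious R Y \<and> stably_computes R X Y f)"

inductive semilinear_set :: "nat set \<Rightarrow> bool" where
  threshold: "semilinear_set {x. a * int x \<ge> b}"
| modset: "c > 0 \<Longrightarrow> semilinear_set {x. (a * int x) mod int c = b mod int c}"
| compl: "semilinear_set A \<Longrightarrow> semilinear_set (- A)"
| inter: "semilinear_set A \<Longrightarrow> semilinear_set B \<Longrightarrow> semilinear_set (A \<inter> B)"
| union: "semilinear_set A \<Longrightarrow> semilinear_set B \<Longrightarrow> semilinear_set (A \<union> B)"

definition semilinear_fun :: "(nat \<Rightarrow> nat) \<Rightarrow> bool" where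
  "semilinear_fun f \<longleftrightarrow>
     (\<exists>ps :: (nat set \<times> rat \<times> rat) list.
        (\<forall>(D, a, b) \<in> set ps. semilinear_set D \<and>
            (\<forall>x \<in> D. of_nat (f x) = a * of_nat x + b)) \<and>
        (\<forall>i < length ps. \<forall>j < length ps. i \<noteq> j \<longrightarrow> fst (ps ! i) \<inter> fst (ps ! j) = {}) \<and>
        (\<Union>(D, a, b) \<in> set ps. D) = UNIV)"

definition superadditive :: "(nat \<Rightarrow> nat) \<Rightarrow> bool" where
  "superadditive f \<longleftrightarrow> (\<forall>x y. f x + f y \<le> f (x + y))"

end

theory Submission
  imports Defs
begin

definition cadd :: "config \<Rightarrow> config \<Rightarrow> config" where
  "cadd C E = (\<lambda>s. C s + E s)"

lemma step_add: "crn_step R C D \<Longrightarrow> crn_step R (cadd C E) (cadd D E)"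
proof -
  assume "crn_step R C D"
  then obtain r p where rp: "(r,p) \<in> R" "\<forall>s. r s \<le> C s" "D = (\<lambda>s. C s - r s + p s)"
    unfolding crn_step_def by auto
  have "\<forall>s. r s \<le> cadd C E s" using rp(2) unfolding cadd_def by (simp add: trans_le_add1)
  moreover have "cadd D E = (\<lambda>s. cadd C E s - r s + p s)"
  proof
    fix s have "r s \<le> C s" using rp(2) by blast
    then show "cadd D E s = cadd C E s - r s + p s" unfolding cadd_def rp(3) by simp
  qed
  ultimately show ?thesis unfolding crn_step_def using rp(1) by blast
qed

lemma reach_add: "reachable R C D \<Longrightarrow> reachable R (cadd C E) (cadd D E)"
  unfolding reachable_def
  by (induction rule: rtranclp_induct) (auto intro: rtranclp.rtrancl_into_rtrancl step_add)

lemma reach_trans: "reachable R C D \<Longrightarrow> reachable R D F \<Longrightarrow> reachable R C F"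
  unfolding reachable_def by auto

lemma reach_refl: "reachable R C C"
  unfolding reachable_def by auto

lemma step_Y_mono: "output_oblivious R Y \<Longrightarrow> crn_step R C D \<Longrightarrow> C Y \<le> D Y"
  unfolding output_oblivious_def crn_step_def by auto

lemma reach_Y_mono: assumes oo: "output_oblivious R Y" and rc: "reachable R C D" shows "C Y \<le> D Y"
  using rc[unfolded reachable_def]
proof (induction rule: rtranclp_induct)
  case base then show ?case by simp
next
  case (step y z) then show ?case using step_Y_mono[OF oo, of y z] by linarith
qed

lemma reach_shift:
  assumes oo: "output_oblivious R Y" and rc: "reachable R C D" and eq: "\<forall>s. s \<noteq> Y \<longrightarrow> C' s = C s"
  shows "reachable R C' (D(Y := D Y - C Y + C' Y))"
  using rc[unfolded reachable_def]
proof (induction rule: rtranclp_induct)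
  case base
  have e: "C(Y := C Y - C Y + C' Y) = C'" using eq by (auto simp: fun_eq_iff)
  show ?case unfolding reachable_def e by simp
next
  case (step D D2)
  have mono: "C Y \<le> D Y" using step(1) oo reach_Y_mono reachable_def by metis
  from step(2) obtain r p where rp: "(r,p) \<in> R" "\<forall>s. r s \<le> D s" "D2 = (\<lambda>s. D s - r s + p s)"
    unfolding crn_step_def by auto
  have rY: "r Y = 0" using oo rp(1) unfolding output_oblivious_def by auto
  define D' where "D' = D(Y := D Y - C Y + C' Y)"
  have a1: "\<forall>s. r s \<le> D' s" using rp(2) rY by (simp add: D'_def)
  have a2: "D2(Y := D2 Y - C Y + C' Y) = (\<lambda>s. D' s - r s + p s)"
  proof
    fix s show "(D2(Y := D2 Y - C Y + C' Y)) s = D' s - r s + p s"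
      using rY mono by (cases "s = Y") (simp_all add: D'_def rp(3))
  qed
  have "crn_step R D' (D2(Y := D2 Y - C Y + C' Y))"
    unfolding crn_step_def using rp(1) a1 a2 by blast
  then have "crn_step R (D(Y := D Y - C Y + C' Y)) (D2(Y := D2 Y - C Y + C' Y))"
    by (simp add: D'_def)
  then show ?case using step(3) unfolding reachable_def by (rule rtranclp.rtrancl_into_rtrancl[rotated])
qed

lemma stable_down:
  assumes oo: "output_oblivious R Y" and st: "stable_config R Y C'"
    and le: "\<forall>s. s \<noteq> Y \<longrightarrow> C s \<le> C' s"
  shows "stable_config R Y C"
  unfolding stable_config_def
proof (intro allI impI)
  fix D assume rd: "reachable R C D"
  define w where "w = (\<lambda>s. if s = Y then 0 else C' s - C s)"
  have r2: "reachable R (cadd C w) (cadd D w)" using reach_add[OF rd] .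
  have eq: "\<forall>s. s \<noteq> Y \<longrightarrow> C' s = cadd C w s" using le by (auto simp: cadd_def w_def)
  note r3 = reach_shift[OF oo r2 eq]
  have "(cadd D w) Y - (cadd C w) Y + C' Y = C' Y"
  proof -
    have "((cadd D w)(Y := cadd D w Y - cadd C w Y + C' Y)) Y = C' Y"
      using st r3 unfolding stable_config_def by blast
    then show ?thesis by simp
  qed
  moreover have "C Y \<le> D Y" using reach_Y_mono[OF oo rd] .
  ultimately show "D Y = C Y" by (simp add: cadd_def w_def)
qed

lemma cadd_comm: "cadd C E = cadd E C"
  by (auto simp: cadd_def fun_eq_iff)

lemma cadd_assoc: "cadd (cadd C E) F = cadd C (cadd E F)"
  by (auto simp: cadd_def fun_eq_iff)

lemma init_add: "init_config X (x + y) = cadd (init_config X x) (init_config X y)"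
  by (auto simp: cadd_def init_config_def fun_eq_iff)

lemma init_zero: "init_config X 0 = (\<lambda>_. 0)"
  by (auto simp: init_config_def)

lemma cadd_zero: "cadd C (\<lambda>_. 0) = C"
  by (auto simp: cadd_def)

lemma reach_support:
  assumes v: "valid_crn S R" and rc: "reachable R C D" and z: "\<forall>s. s \<notin> S \<longrightarrow> C s = 0"
  shows "\<forall>s. s \<notin> S \<longrightarrow> D s = 0"
  using rc[unfolded reachable_def]
proof (induction rule: rtranclp_induct)
  case base then show ?case using z by simp
next
  case (step D D2)
  from step(2) obtain r p where rp: "(r,p) \<in> R" "D2 = (\<lambda>s. D s - r s + p s)"
    unfolding crn_step_def by auto
  have "\<forall>s. s \<notin> S \<longrightarrow> p s = 0" using v rp(1) unfolding valid_crn_def by auto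
  then show ?case using step(3) rp(2) by simp
qed

lemma nat_mono_sub:
  fixes u :: "nat \<Rightarrow> nat"
  shows "\<exists>\<psi>::nat\<Rightarrow>nat. strict_mono \<psi> \<and> mono (\<lambda>n. u (\<psi> n))"
proof -
  obtain \<psi> :: "nat \<Rightarrow> nat" where ps: "strict_mono \<psi>" "monoseq (\<lambda>n. u (\<psi> n))" using seq_monosub[of u] by (elim exE conjE) (rule that)
  show ?thesis
  proof (cases "\<forall>m. \<forall>n\<ge>m. u (\<psi> m) \<le> u (\<psi> n)")
    case True
    have "mono (\<lambda>n. u (\<psi> n))" using True by (intro monoI) simp
    then have "strict_mono \<psi> \<and> mono (\<lambda>n. u (\<psi> n))" using ps(1) by simp
    then show ?thesis by blast
  next
    case False
    then have dec: "\<forall>m. \<forall>n\<ge>m. u (\<psi> n) \<le> u (\<psi> m)" using ps(2) unfolding monoseq_def by blast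
    define v where "v = (\<lambda>n. u (\<psi> n))"
    define m where "m = (LEAST val. \<exists>n. v n = val)"
    have "\<exists>n. v n = m" unfolding m_def by (rule LeastI_ex) blast
    then obtain N where N: "v N = m" by blast
    have const: "\<forall>n\<ge>N. v n = v N"
    proof (intro allI impI)
      fix n assume "N \<le> n"
      then have "v n \<le> v N" using dec unfolding v_def by blast
      moreover have "m \<le> v n" unfolding m_def by (rule Least_le) blast
      ultimately show "v n = v N" using N by simp
    qed
    define \<psi>' where "\<psi>' = (\<lambda>n. \<psi> (n + N))"
    have "strict_mono \<psi>'" using ps(1) unfolding strict_mono_def \<psi>'_def by simp
    moreover have "mono (\<lambda>n. u (\<psi>' n))"
    proof (rule monoI)
      fix x y :: nat assume "x \<le> y"
      have "v (x + N) = v N" by (rule const[rule_format]) simp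
      moreover have "v (y + N) = v N" by (rule const[rule_format]) simp
      ultimately
      show "u (\<psi>' x) \<le> u (\<psi>' y)" unfolding \<psi>'_def v_def by simp
    qed
    ultimately have "strict_mono \<psi>' \<and> mono (\<lambda>n. u (\<psi>' n))" by simp
    then show ?thesis by blast
  qed
qed

lemma dickson:
  fixes v :: "nat \<Rightarrow> nat \<Rightarrow> nat"
  assumes "finite S"
  shows "\<exists>\<phi>::nat\<Rightarrow>nat. strict_mono \<phi> \<and> (\<forall>s\<in>S. mono (\<lambda>n. v (\<phi> n) s))"
  using assms
proof (induction S rule: finite_induct)
  case empty
  show ?case by (rule exI[of _ id]) (simp add: strict_mono_def)
next
  case (insert s S)
  then obtain \<phi> :: "nat \<Rightarrow> nat" where ph: "strict_mono \<phi>" "\<forall>t\<in>S. mono (\<lambda>n. v (\<phi> n) t)" by blast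
  obtain \<psi> :: "nat \<Rightarrow> nat" where ps: "strict_mono \<psi>" "mono (\<lambda>n. v (\<phi> (\<psi> n)) s)"
    using nat_mono_sub[of "\<lambda>n. v (\<phi> n) s"] by blast
  have "strict_mono (\<phi> \<circ> \<psi>)" using ph(1) ps(1) by (simp add: strict_mono_def)
  moreover have "\<forall>t\<in>insert s S. mono (\<lambda>n. v ((\<phi> \<circ> \<psi>) n) t)"
  proof
    fix t assume "t \<in> insert s S"
    then show "mono (\<lambda>n. v ((\<phi> \<circ> \<psi>) n) t)"
    proof
      assume "t = s" then show ?thesis using ps(2) by simp
    next
      assume "t \<in> S"
      then have m1: "mono (\<lambda>n. v (\<phi> n) t)" using ph(2) by blast
      have m2: "mono \<psi>" using ps(1) by (rule strict_mono_mono)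
      show ?thesis unfolding mono_def comp_def
        using m1 m2 unfolding mono_def by blast
    qed
  qed
  ultimately show ?case by blast
qed

lemma mono_dich:
  fixes u :: "nat \<Rightarrow> nat"
  assumes "mono u"
  shows "(\<exists>N. \<forall>n\<ge>N. u n = u N) \<or> (\<forall>M. \<exists>n. M \<le> u n)"
proof (cases "\<forall>M. \<exists>n. M \<le> u n")
  case True then show ?thesis by blast
next
  case False
  then obtain M where M: "\<forall>n. u n < M" by (auto simp: not_le)
  have "range u \<subseteq> {..<M}" using M by auto
  then have fin: "finite (range u)" by (rule finite_subset) simp
  define m where "m = Max (range u)"
  have "m \<in> range u" unfolding m_def using fin by (intro Max_in) auto
  then obtain N where N: "u N = m" by auto
  have "\<forall>n\<ge>N. u n = u N"
  proof (intro allI impI)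
    fix n assume "N \<le> n"
    then have "u N \<le> u n" using assms unfolding mono_def by blast
    moreover have "u n \<le> m" unfolding m_def using fin by (intro Max_ge) auto
    ultimately show "u n = u N" using N by simp
  qed
  then show ?thesis by blast
qed

lemma arith_fwd:
  fixes f :: "nat \<Rightarrow> nat"
  assumes sa: "\<forall>x y. f x + f y \<le> f (x + y)" and q: "q > 0"
    and A1: "\<forall>k r. f (a + r) + k * G \<le> f (a + k * q + r)"
    and A2: "\<forall>k. f (a + k * q) = f a + k * G"
  shows "\<exists>N. \<forall>x\<ge>N. f (x + q) = f x + G"
proof -
  have ub: "f x \<le> f a + k * G" if "x \<le> a + k * q" for x k
  proof -
    have "f x + f (a + k * q - x) \<le> f (a + k * q)" using sa that
      by (metis le_add_diff_inverse)
    then show ?thesis using A2 by simp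
  qed
  have ev: "\<exists>K. \<forall>k\<ge>K. f (a + r + Suc k * q) = f (a + r + k * q) + G" for r
  proof -
    define u where "u = (\<lambda>k. f (a + r + k * q) - k * G)"
    have ge: "k * G \<le> f (a + r + k * q)" for k
    proof -
      have e: "a + k * q + r = a + r + k * q" by simp
      show ?thesis using A1[rule_format, where k=k and r=r] unfolding e by linarith
    qed
    have st: "f (a + r + k * q) + G \<le> f (a + r + Suc k * q)" for k
      using A1[rule_format, where k=1 and r="r + k * q"] by (simp add: algebra_simps)
    have "mono u"
    proof (rule incseq_SucI)
      fix k show "u k \<le> u (Suc k)" unfolding u_def using st[of k] ge[of k] ge[of "Suc k"] by simp
    qed
    moreover have bnd: "u k \<le> f a + r * G" for k
    proof -
      have "a + r + k * q \<le> a + (k + r) * q" using q by (simp add: algebra_simps)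
      then have "f (a + r + k * q) \<le> f a + (k + r) * G" by (rule ub)
      then show ?thesis unfolding u_def by (simp add: algebra_simps)
    qed
    ultimately have "\<exists>N. \<forall>n\<ge>N. u n = u N"
      using mono_dich[of u] by (meson not_less_eq_eq le_trans)
    then obtain K where K: "\<forall>n\<ge>K. u n = u K" by blast
    have "f (a + r + Suc k * q) = f (a + r + k * q) + G" if "k \<ge> K" for k
    proof -
      have "u (Suc k) = u k" using K that by (metis le_SucI)
      then show ?thesis unfolding u_def using st[of k] ge[of k] ge[of "Suc k"] by simp
    qed
    then show ?thesis by blast
  qed
  then obtain Kf where Kf: "\<forall>r k. k \<ge> Kf r \<longrightarrow> f (a + r + Suc k * q) = f (a + r + k * q) + G"
    by metis
  define Km where "Km = Max (Kf ` {..<q})"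
  have "\<forall>x\<ge>a + Km * q. f (x + q) = f x + G"
  proof (intro allI impI)
    fix x assume x: "a + Km * q \<le> x"
    define r where "r = (x - a) mod q"
    define k where "k = (x - a) div q"
    have xe: "x = a + r + k * q" using x unfolding r_def k_def by (simp add: algebra_simps)
    have "r < q" unfolding r_def using q by simp
    then have "Kf r \<le> Km" unfolding Km_def by (intro Max_ge) auto
    moreover have "Km \<le> k"
    proof -
      have "Km * q \<le> x - a" using x by simp
      then have "Km \<le> (x - a) div q" using q by (simp add: less_eq_div_iff_mult_less_eq)
      then show ?thesis unfolding k_def .
    qed
    ultimately have "f (a + r + Suc k * q) = f (a + r + k * q) + G" using Kf by auto
    then show "f (x + q) = f x + G" using xe by (simp add: algebra_simps)
  qed
  then show ?thesis by blast
qed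

lemma sl_singleton: "semilinear_set {n}"
proof -
  have "semilinear_set ({x. int n \<le> 1 * int x} \<inter> {x. - int n \<le> (-1) * int x})"
    by (intro semilinear_set.inter semilinear_set.threshold)
  moreover have "{x. int n \<le> 1 * int x} \<inter> {x. - int n \<le> (-1) * int x} = {n}" by auto
  ultimately show ?thesis by simp
qed

lemma sl_res: assumes "q > 0" "r < q" shows "semilinear_set {x. N \<le> x \<and> x mod q = r}"
proof -
  have "semilinear_set ({x. int N \<le> 1 * int x} \<inter> {x. (1 * int x) mod int q = int r mod int q})"
    using assms by (intro semilinear_set.inter semilinear_set.threshold semilinear_set.modset) auto
  moreover have "{x. int N \<le> 1 * int x} \<inter> {x. (1 * int x) mod int q = int r mod int q} = {x. N \<le> x \<and> x mod q = r}"
  proof -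
    have e1: "int r mod int q = int r" using assms by simp
    have e2: "(int x mod int q = int r) = (x mod q = r)" for x
      by (simp only: zmod_int[symmetric] of_nat_eq_iff)
    have e3: "(int N \<le> 1 * int x) = (N \<le> x)" for x by simp
    show ?thesis
    proof (rule set_eqI)
      fix x show "x \<in> {x. int N \<le> 1 * int x} \<inter> {x. (1 * int x) mod int q = int r mod int q} \<longleftrightarrow> x \<in> {x. N \<le> x \<and> x mod q = r}"
        using e3[of x] by (simp only: Int_iff mem_Collect_eq e1 e2 mult_1 of_nat_le_iff)
    qed
  qed
  ultimately show ?thesis by simp
qed

lemma periodic_semilinear:
  fixes f :: "nat \<Rightarrow> nat"
  assumes q: "q > 0" and per: "\<forall>x\<ge>N. f (x + q) = f x + G"
  shows "semilinear_fun f"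
proof -
  have pt: "f (x + t * q) = f x + t * G" if "x \<ge> N" for x t
  proof (induction t)
    case 0 then show ?case by simp
  next
    case (Suc t)
    have "f (x + Suc t * q) = f ((x + t * q) + q)" by (simp add: algebra_simps)
    also have "\<dots> = f (x + t * q) + G" using per that by simp
    finally show ?case using Suc by simp
  qed
  define Dr where "Dr = (\<lambda>r. {x. N \<le> x \<and> x mod q = r})"
  define mr where "mr = (\<lambda>r. LEAST x. x \<in> Dr r)"
  define sl :: rat where "sl = of_nat G / of_nat q"
  have memr: "N * q + r \<in> Dr r" if "r < q" for r
  proof -
    have "N * 1 \<le> N * q" using q by (intro mult_le_mono2) simp
    then have "N \<le> N * q + r" by linarith
    moreover have "(N * q + r) mod q = r" using that by simp
    ultimately show ?thesis unfolding Dr_def by blast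
  qed
  have aff: "rat_of_nat (f x) = sl * of_nat x + (of_nat (f (mr r)) - sl * of_nat (mr r))"
    if r: "r < q" and x: "x \<in> Dr r" for r x
  proof -
    have m1: "mr r \<in> Dr r" unfolding mr_def using memr[OF r] by (rule LeastI)
    have m2: "mr r \<le> x" unfolding mr_def using x by (rule Least_le)
    have "x mod q = mr r mod q" using x m1 unfolding Dr_def by simp
    then have "q dvd x - mr r" using m2 by (simp add: mod_eq_dvd_iff_nat)
    then obtain t where t: "x - mr r = q * t" by (elim dvdE)
    have xe: "x = mr r + t * q" using t m2 by (simp add: algebra_simps)
    have "N \<le> mr r" using m1 unfolding Dr_def by simp
    then have fx: "f x = f (mr r) + t * G" using pt xe by simp
    have slq: "sl * of_nat q = of_nat G" unfolding sl_def using q by simp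
    have h: "sl * of_nat (t * q) = of_nat (t * G)" using slq by (simp add: algebra_simps)
    have hx: "rat_of_nat x = of_nat (mr r) + of_nat (t * q)" using xe by simp
    have "rat_of_nat (f x) = of_nat (f (mr r)) + sl * of_nat (t * q)" by (simp only: fx h of_nat_add)
    also have "\<dots> = sl * of_nat x + (of_nat (f (mr r)) - sl * of_nat (mr r))"
      unfolding hx by (simp add: algebra_simps)
    finally show ?thesis .
  qed
  define Dom where "Dom = (\<lambda>i. if i < N then {i} else Dr (i - N))"
  define A where "A = (\<lambda>i. if i < N then (0::rat) else sl)"
  define B where "B = (\<lambda>i. if i < N then rat_of_nat (f i) else of_nat (f (mr (i - N))) - sl * of_nat (mr (i - N)))"
  define ps where "ps = map (\<lambda>i. (Dom i, A i, B i)) [0..<N + q]"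
  have idx: "i = (if x < N then x else N + x mod q)" if "i < N + q" "x \<in> Dom i" for i x
    using that unfolding Dom_def Dr_def by (auto split: if_splits)
  have cov: "x \<in> Dom (if x < N then x else N + x mod q)" for x
    unfolding Dom_def Dr_def by auto
  have c1: "\<forall>(D, a, b) \<in> set ps. semilinear_set D \<and> (\<forall>x \<in> D. of_nat (f x) = a * of_nat x + b)"
  proof
    fix z assume "z \<in> set ps"
    then obtain i where i: "i < N + q" "z = (Dom i, A i, B i)" unfolding ps_def by auto
    show "case z of (D, a, b) \<Rightarrow> semilinear_set D \<and> (\<forall>x \<in> D. of_nat (f x) = a * of_nat x + b)"
    proof (cases "i < N")
      case True
      then show ?thesis using i by (simp add: Dom_def A_def B_def sl_singleton)
    next
      case False
      then have r: "i - N < q" using i by simp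
      have "semilinear_set (Dr (i - N))" unfolding Dr_def using q r by (rule sl_res)
      moreover have "\<forall>x \<in> Dr (i - N). rat_of_nat (f x) = sl * of_nat x + (of_nat (f (mr (i - N))) - sl * of_nat (mr (i - N)))"
        using aff[OF r] by blast
      ultimately show ?thesis using i False by (simp add: Dom_def A_def B_def)
    qed
  qed
  have c2: "\<forall>i < length ps. \<forall>j < length ps. i \<noteq> j \<longrightarrow> fst (ps ! i) \<inter> fst (ps ! j) = {}"
  proof (intro allI impI)
    fix i j assume ij: "i < length ps" "j < length ps" "i \<noteq> j"
    then have "fst (ps ! i) = Dom i" "fst (ps ! j) = Dom j" "i < N + q" "j < N + q"
      unfolding ps_def by auto
    then show "fst (ps ! i) \<inter> fst (ps ! j) = {}" using idx ij(3) by blast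
  qed
  have c3: "(\<Union>(D, a, b) \<in> set ps. D) = UNIV"
  proof -
    have "x \<in> (\<Union>(D, a, b) \<in> set ps. D)" for x
    proof -
      define i where "i = (if x < N then x else N + x mod q)"
      have "i < N + q" unfolding i_def using q by auto
      then have "(Dom i, A i, B i) \<in> set ps" unfolding ps_def by auto
      then show ?thesis using cov[of x] unfolding i_def[symmetric] by force
    qed
    then show ?thesis by blast
  qed
  show ?thesis unfolding semilinear_fun_def using c1 c2 c3 by blast
qed

locale ocrn =
  fixes S :: "nat set" and R :: "reaction set" and X Y :: nat and f :: "nat \<Rightarrow> nat"
  assumes valid: "valid_crn S R" and XS: "X \<in> S" and YS: "Y \<in> S" and XY: "X \<noteq> Y"
    and oo: "output_oblivious R Y" and sc: "stably_computes R X Y f"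
begin

lemma upper: "reachable R (init_config X x) C \<Longrightarrow> C Y \<le> f x"
proof -
  assume rc: "reachable R (init_config X x) C"
  then obtain Ot where "reachable R C Ot" "Ot Y = f x" using sc unfolding stably_computes_def by blast
  then show "C Y \<le> f x" using reach_Y_mono[OF oo] by metis
qed

lemma full_stable: "reachable R (init_config X x) C \<Longrightarrow> C Y = f x \<Longrightarrow> stable_config R Y C"
  unfolding stable_config_def
proof (intro allI impI)
  fix D assume a: "reachable R (init_config X x) C" "C Y = f x" "reachable R C D"
  have "D Y \<le> f x" using upper reach_trans[OF a(1) a(3)] by blast
  moreover have "C Y \<le> D Y" using reach_Y_mono[OF oo a(3)] .
  ultimately show "D Y = C Y" using a(2) by simp
qed

lemma stable_val: "reachable R (init_config X x) C \<Longrightarrow> stable_config R Y C \<Longrightarrow> C Y = f x"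
proof -
  assume a: "reachable R (init_config X x) C" "stable_config R Y C"
  then obtain Ot where "reachable R C Ot" "Ot Y = f x" using sc unfolding stably_computes_def by blast
  then show "C Y = f x" using a(2) unfolding stable_config_def by metis
qed

lemma init_Y: "init_config X n Y = 0"
  using XY by (simp add: init_config_def)

lemma superadd: "f x + f y \<le> f (x + y)"
proof -
  obtain Ox where ox: "reachable R (init_config X x) Ox" "Ox Y = f x"
    using sc reach_refl unfolding stably_computes_def by blast
  obtain Oy where oy: "reachable R (init_config X y) Oy" "Oy Y = f y"
    using sc reach_refl unfolding stably_computes_def by blast
  have "reachable R (cadd (init_config X x) (init_config X y)) (cadd Ox (init_config X y))"
    using reach_add[OF ox(1)] .
  moreover have "reachable R (cadd (init_config X y) Ox) (cadd Oy Ox)"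
    using reach_add[OF oy(1)] .
  ultimately have "reachable R (init_config X (x + y)) (cadd Oy Ox)"
    unfolding init_add using cadd_comm reach_trans by metis
  then have "cadd Oy Ox Y \<le> f (x + y)" by (rule upper)
  then show ?thesis using ox oy by (simp add: cadd_def)
qed

lemma fmono: "x \<le> y \<Longrightarrow> f x \<le> f y"
  using superadd[of x "y - x"] by simp

lemma zero_supp: "\<forall>s. s \<notin> S \<longrightarrow> init_config X n s = 0"
  using XS by (auto simp: init_config_def)

primrec ch :: "nat \<Rightarrow> config" where
  "ch 0 = init_config X 0"
| "ch (Suc n) = (SOME D. reachable R (cadd (ch n) (init_config X 1)) D \<and> D Y = f (Suc n))"

lemma ch_prop: "reachable R (init_config X n) (ch n) \<and> ch n Y = f n"
proof (induction n)
  case 0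
  have "f 0 = 0" using superadd[of 0 0] by simp
  then show ?case using init_Y reach_refl by simp
next
  case (Suc n)
  have r1: "reachable R (init_config X (Suc n)) (cadd (ch n) (init_config X 1))"
    using reach_add[OF Suc[THEN conjunct1], of "init_config X 1"] init_add[of X n 1] by simp
  then obtain Ot where "reachable R (cadd (ch n) (init_config X 1)) Ot" "Ot Y = f (Suc n)"
    using sc unfolding stably_computes_def by blast
  then have "reachable R (cadd (ch n) (init_config X 1)) (ch (Suc n)) \<and> ch (Suc n) Y = f (Suc n)"
    unfolding ch.simps by (rule someI[where x=Ot, OF conjI])
  then show ?case using r1 reach_trans by blast
qed

lemma ch_link: "reachable R (cadd (ch x) (init_config X r)) (ch (x + r))"
proof (induction r)
  case 0 then show ?case by (simp add: init_zero cadd_zero reach_refl)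
next
  case (Suc r)
  have h1: "reachable R (cadd (cadd (ch x) (init_config X r)) (init_config X 1)) (cadd (ch (x + r)) (init_config X 1))"
    using reach_add[OF Suc] .
  have h2: "cadd (cadd (ch x) (init_config X r)) (init_config X 1) = cadd (ch x) (init_config X (Suc r))"
    using init_add[of X r 1] by (simp add: cadd_assoc)
  have h3: "reachable R (cadd (ch (x + r)) (init_config X 1)) (ch (Suc (x + r)))"
  proof -
    have "\<exists>Ot. reachable R (cadd (ch (x + r)) (init_config X 1)) Ot \<and> Ot Y = f (Suc (x + r))"
    proof -
      have "reachable R (init_config X (Suc (x + r))) (cadd (ch (x + r)) (init_config X 1))"
        using reach_add[OF ch_prop[THEN conjunct1], of "x + r" "init_config X 1"] init_add[of X "x + r" 1] by simp
      then show ?thesis using sc unfolding stably_computes_def by blast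
    qed
    then show ?thesis unfolding ch.simps by (rule someI_ex[THEN conjunct1])
  qed
  have h4: "x + Suc r = Suc (x + r)" by simp
  show ?case unfolding h4 h2[symmetric] by (rule reach_trans[OF h1 h3])
qed

lemma ch_supp: "\<forall>s. s \<notin> S \<longrightarrow> ch n s = 0"
  using reach_support[OF valid ch_prop[THEN conjunct1] zero_supp] .

end

context ocrn begin

lemma ch_stable: "stable_config R Y (ch n)"
  using full_stable ch_prop by blast

lemma eventually_periodic: "\<exists>N q G. q > 0 \<and> (\<forall>x\<ge>N. f (x + q) = f x + G)"
proof -
  have finS: "finite S" using valid unfolding valid_crn_def by blast
  obtain \<phi> :: "nat \<Rightarrow> nat" where ph: "strict_mono \<phi>" "\<forall>s\<in>S. mono (\<lambda>n. ch (\<phi> n) s)"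
    using dickson[OF finS, of "\<lambda>n s. ch n s"] by blast
  define Bd where "Bd = {s\<in>S. \<exists>N. \<forall>n\<ge>N. ch (\<phi> n) s = ch (\<phi> N) s}"
  have "\<forall>s\<in>Bd. \<exists>N. \<forall>n\<ge>N. ch (\<phi> n) s = ch (\<phi> N) s" unfolding Bd_def by blast
  then obtain Nf where Nf: "\<forall>s\<in>Bd. \<forall>n\<ge>Nf s. ch (\<phi> n) s = ch (\<phi> (Nf s)) s"
    by metis
  have finBd: "finite Bd" using finS unfolding Bd_def by simp
  define N0 where "N0 = Max (insert 0 (Nf ` Bd))"
  have bdc: "ch (\<phi> n) s = ch (\<phi> N0) s" if "s \<in> Bd" "n \<ge> N0" for s n
  proof -
    have "Nf s \<le> N0" unfolding N0_def using finBd that(1) by (intro Max_ge) auto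
    have nf: "\<And>n. n \<ge> Nf s \<Longrightarrow> ch (\<phi> n) s = ch (\<phi> (Nf s)) s"
      using Nf that(1) by blast
    have "ch (\<phi> n) s = ch (\<phi> (Nf s)) s" by (rule nf) (use \<open>Nf s \<le> N0\<close> that(2) in linarith)
    moreover have "ch (\<phi> N0) s = ch (\<phi> (Nf s)) s" by (rule nf) (fact)
    ultimately show ?thesis by simp
  qed
  have unb: "\<exists>n. M \<le> ch (\<phi> n) s" if "s \<in> S - Bd" for s M
  proof -
    have "mono (\<lambda>n. ch (\<phi> n) s)" using ph(2) that by blast
    from mono_dich[OF this] show ?thesis using that unfolding Bd_def by blast
  qed
  define a where "a = \<phi> N0"
  define b where "b = \<phi> (Suc N0)"
  have ab: "a < b" unfolding a_def b_def using ph(1) by (simp add: strict_mono_def)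
  define q where "q = b - a"
  have q: "q > 0" "a + q = b" unfolding q_def using ab by auto
  have le_ab: "ch a s \<le> ch b s" for s
  proof (cases "s \<in> S")
    case True
    then show ?thesis using ph(2) unfolding a_def b_def mono_def by simp
  next
    case False
    then show ?thesis using ch_supp by simp
  qed
  define e where "e = (\<lambda>s. ch b s - ch a s)"
  have chb: "ch b = cadd (ch a) e" unfolding e_def cadd_def using le_ab by (auto simp: fun_eq_iff)
  define G where "G = f b - f a"
  have eY: "e Y = G" unfolding e_def G_def using ch_prop by simp
  have eBd: "e s = 0" if "s \<in> Bd" for s
    unfolding e_def a_def b_def using bdc[OF that, of "Suc N0"] by simp
  define P where "P = (\<lambda>k s. ch a s + k * e s)"
  have pump: "reachable R (cadd (ch a) (init_config X (k * q))) (P k)" for k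
  proof (induction k)
    case 0
    have "P 0 = ch a" unfolding P_def by simp
    then show ?case by (simp add: init_zero cadd_zero reach_refl)
  next
    case (Suc k)
    have h1: "reachable R (cadd (cadd (ch a) (init_config X (k * q))) (init_config X q)) (cadd (P k) (init_config X q))"
      using reach_add[OF Suc] .
    have h2: "cadd (cadd (ch a) (init_config X (k * q))) (init_config X q) = cadd (ch a) (init_config X (Suc k * q))"
      using init_add[of X "k * q" q] by (simp add: cadd_assoc add.commute)
    have h3: "reachable R (cadd (cadd (ch a) (init_config X q)) (\<lambda>s. k * e s)) (cadd (ch b) (\<lambda>s. k * e s))"
      using reach_add[OF ch_link[of a q]] unfolding q(2) .
    have h4: "cadd (P k) (init_config X q) = cadd (cadd (ch a) (init_config X q)) (\<lambda>s. k * e s)"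
      unfolding P_def cadd_def by (auto simp: fun_eq_iff)
    have h5: "cadd (ch b) (\<lambda>s. k * e s) = P (Suc k)"
      unfolding chb P_def cadd_def by (auto simp: fun_eq_iff)
    show ?case using reach_trans[OF h1 h3[folded h4, unfolded h5]] unfolding h2 .
  qed
  have reachP: "reachable R (init_config X (a + k * q + r)) (cadd (ch (a + r)) (\<lambda>s. k * e s))" for k r
  proof -
    have i1: "init_config X (a + k * q + r) = cadd (cadd (init_config X a) (init_config X (k * q))) (init_config X r)"
      using init_add by metis
    have r1: "reachable R (cadd (init_config X a) (init_config X (k * q))) (P k)"
      using reach_trans[OF reach_add[OF ch_prop[THEN conjunct1, of a]] pump] .
    have r2: "reachable R (cadd (cadd (init_config X a) (init_config X (k * q))) (init_config X r)) (cadd (P k) (init_config X r))"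
      using reach_add[OF r1] .
    have e2: "cadd (P k) (init_config X r) = cadd (cadd (ch a) (init_config X r)) (\<lambda>s. k * e s)"
      unfolding P_def cadd_def by (auto simp: fun_eq_iff)
    have r3: "reachable R (cadd (cadd (ch a) (init_config X r)) (\<lambda>s. k * e s)) (cadd (ch (a + r)) (\<lambda>s. k * e s))"
      using reach_add[OF ch_link] .
    show ?thesis unfolding i1 using reach_trans[OF r2 r3[folded e2]] .
  qed
  have A1: "\<forall>k r. f (a + r) + k * G \<le> f (a + k * q + r)"
  proof (intro allI)
    fix k r
    have "cadd (ch (a + r)) (\<lambda>s. k * e s) Y \<le> f (a + k * q + r)" using upper[OF reachP] .
    then show "f (a + r) + k * G \<le> f (a + k * q + r)" using ch_prop eY by (simp add: cadd_def)
  qed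
  have A2: "\<forall>k. f (a + k * q) = f a + k * G"
  proof
    fix k
    have rk: "reachable R (init_config X (a + k * q)) (P k)"
      using reachP[of k 0] unfolding P_def cadd_def by simp
    have "\<forall>s\<in>S - Bd. \<exists>n. P k s \<le> ch (\<phi> n) s" using unb by blast
    then obtain Mf where Mf: "\<forall>s\<in>S - Bd. P k s \<le> ch (\<phi> (Mf s)) s" by metis
    define m where "m = Max (insert N0 (Mf ` (S - Bd)))"
    have finSB: "finite (S - Bd)" using finS by simp
    have le: "P k s \<le> ch (\<phi> m) s" for s
    proof -
      consider "s \<in> S - Bd" | "s \<in> Bd" | "s \<notin> S" unfolding Bd_def by blast
      then show ?thesis
      proof cases
        case 1
        then have "Mf s \<le> m" unfolding m_def using finSB by (intro Max_ge) auto
        then have "ch (\<phi> (Mf s)) s \<le> ch (\<phi> m) s" using ph(2) 1 unfolding mono_def by blast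
        then show ?thesis using Mf 1 by (meson le_trans)
      next
        case 2
        then have "s \<in> S" unfolding Bd_def by blast
        have "N0 \<le> m" unfolding m_def using finSB by (intro Max_ge) auto
        then have "ch (\<phi> N0) s \<le> ch (\<phi> m) s" using ph(2) \<open>s \<in> S\<close> unfolding mono_def by blast
        then show ?thesis unfolding P_def a_def using eBd[OF 2] by simp
      next
        case 3
        then show ?thesis unfolding P_def e_def using ch_supp by simp
      qed
    qed
    have "stable_config R Y (P k)"
      using stable_down[OF oo ch_stable[of "\<phi> m"]] le by blast
    then have "P k Y = f (a + k * q)" using stable_val[OF rk] by blast
    then show "f (a + k * q) = f a + k * G" unfolding P_def using ch_prop eY by simp
  qed
  have sa: "\<forall>x y. f x + f y \<le> f (x + y)" using superadd by blast
  from arith_fwd[OF sa q(1) A1 A2] show ?thesis using q(1) by blast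
qed

end

lemma forward:
  assumes "obliviously_computable f"
  shows "semilinear_fun f \<and> superadditive f"
proof -
  obtain S R X Y where "valid_crn S R" "X \<in> S" "Y \<in> S" "X \<noteq> Y"
    "output_oblivious R Y" "stably_computes R X Y f"
    using assms unfolding obliviously_computable_def by blast
  then interpret ocrn S R X Y f by unfold_locales
  obtain N q G where "q > 0" "\<forall>x\<ge>N. f (x + q) = f x + G" using eventually_periodic by blast
  then have "semilinear_fun f" by (rule periodic_semilinear)
  moreover have "superadditive f" unfolding superadditive_def using superadd by blast
  ultimately show ?thesis by blast
qed

definition eper :: "nat set \<Rightarrow> nat \<Rightarrow> nat \<Rightarrow> bool" where
  "eper A n0 p \<longleftrightarrow> p > 0 \<and> (\<forall>x\<ge>n0. x \<in> A \<longleftrightarrow> x + p \<in> A)"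

lemma eperI: "p > 0 \<Longrightarrow> (\<And>x. x \<ge> n0 \<Longrightarrow> (x \<in> A \<longleftrightarrow> x + p \<in> A)) \<Longrightarrow> eper A n0 p"
  unfolding eper_def by blast

lemma eperD: "eper A n0 p \<Longrightarrow> x \<ge> n0 \<Longrightarrow> (x \<in> A \<longleftrightarrow> x + p \<in> A)"
  unfolding eper_def by blast

lemma eper_pos: "eper A n0 p \<Longrightarrow> p > 0"
  unfolding eper_def by blast

lemma eper_mult: "eper A n0 p \<Longrightarrow> x \<ge> n0 \<Longrightarrow> (x \<in> A \<longleftrightarrow> x + k * p \<in> A)"
proof (induction k)
  case 0 then show ?case by simp
next
  case (Suc k)
  have "x + k * p \<ge> n0" using Suc by simp
  then have "x + k * p \<in> A \<longleftrightarrow> x + k * p + p \<in> A" using eperD \<open>eper A n0 p\<close> by blast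
  moreover have "x + k * p + p = x + Suc k * p" by simp
  ultimately show ?case using Suc by simp
qed

lemma eper_mono: "eper A n0 p \<Longrightarrow> n0 \<le> n1 \<Longrightarrow> eper A n1 p"
proof (rule eperI)
  assume a: "eper A n0 p" "n0 \<le> n1"
  show "p > 0" using a(1) by (rule eper_pos)
  fix x assume "n1 \<le> x"
  then have "n0 \<le> x" using a(2) by simp
  then show "x \<in> A \<longleftrightarrow> x + p \<in> A" by (rule eperD[OF a(1)])
qed

lemma eper_mul: "eper A n0 p \<Longrightarrow> k > 0 \<Longrightarrow> eper A n0 (k * p)"
proof (rule eperI)
  assume "eper A n0 p" "k > 0"
  then show "k * p > 0" using eper_pos by auto
  fix x assume "x \<ge> n0"
  then show "x \<in> A \<longleftrightarrow> x + k * p \<in> A" using eper_mult[OF \<open>eper A n0 p\<close>] by blast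
qed

lemma eper_combine: "eper A n0 p \<Longrightarrow> eper B n1 p1 \<Longrightarrow> eper A (max n0 n1) (p * p1) \<and> eper B (max n0 n1) (p * p1)"
proof -
  assume a: "eper A n0 p" "eper B n1 p1"
  have "p > 0" "p1 > 0" using a eper_pos by auto
  have "eper A n0 (p * p1)" using eper_mul[OF a(1) \<open>p1 > 0\<close>] by (simp add: mult.commute)
  then have "eper A (max n0 n1) (p * p1)" by (rule eper_mono) simp
  moreover have "eper B (max n0 n1) (p * p1)" using eper_mul[OF a(2) \<open>p > 0\<close>] by (rule eper_mono) simp
  ultimately show ?thesis by blast
qed

lemma sl_periodic: "semilinear_set A \<Longrightarrow> \<exists>n0 p. eper A n0 p"
proof (induction rule: semilinear_set.induct)
  case (threshold a b)
  define n0 where "n0 = nat \<bar>b\<bar> + 1"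
  have "\<forall>x\<ge>n0. (b \<le> a * int x) \<longleftrightarrow> (b \<le> a * int (x + 1))"
  proof (intro allI impI)
    fix x assume x: "n0 \<le> x"
    then have xb: "int x > \<bar>b\<bar>" unfolding n0_def by linarith
    consider "a > 0" | "a = 0" | "a < 0" by linarith
    then show "(b \<le> a * int x) \<longleftrightarrow> (b \<le> a * int (x + 1))"
    proof cases
      case 1
      have "a * int x \<ge> int x" using 1 by (simp add: mult_le_cancel_right1)
      moreover have "a * int (x + 1) \<ge> int x" using 1 by (smt (verit) mult_le_cancel_right1 of_nat_0_le_iff of_nat_Suc Suc_eq_plus1)
      ultimately show ?thesis using xb by linarith
    next
      case 2 then show ?thesis by simp
    next
      case 3
      have "a * int x \<le> - int x" using 3 by (smt (verit) mult_le_cancel_right1 of_nat_0_le_iff mult_minus_left)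
      moreover have "a * int (x + 1) \<le> - int x" using 3 by (smt (verit) mult_le_cancel_right1 of_nat_0_le_iff mult_minus_left of_nat_Suc Suc_eq_plus1)
      ultimately show ?thesis using xb by linarith
    qed
  qed
  then have "eper {x. b \<le> a * int x} n0 1" by (intro eperI) simp_all
  then show ?case by blast
next
  case (modset c a b)
  have "\<forall>x. (a * int (x + c)) mod int c = (a * int x) mod int c"
  proof
    fix x
    have "a * int (x + c) = a * int x + a * int c" by (simp add: algebra_simps)
    then show "(a * int (x + c)) mod int c = (a * int x) mod int c" by simp
  qed
  then have "eper {x. (a * int x) mod int c = b mod int c} 0 c" using modset by (intro eperI) simp_all
  then show ?case by blast
next
  case (compl A)
  then obtain n0 p where "eper A n0 p" by blast
  then have "eper (- A) n0 p"
  proof (intro eperI)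
    assume e: "eper A n0 p"
    then show "p > 0" by (rule eper_pos)
    fix x assume "x \<ge> n0"
    then have "x \<in> A \<longleftrightarrow> x + p \<in> A" using e eperD by blast
    then show "x \<in> - A \<longleftrightarrow> x + p \<in> - A" by simp
  qed
  then show ?case by blast
next
  case (inter A B)
  then obtain n0 p n1 p1 where "eper A n0 p" "eper B n1 p1" by blast
  from eper_combine[OF this] have e: "eper A (max n0 n1) (p * p1)" "eper B (max n0 n1) (p * p1)" by auto
  have "eper (A \<inter> B) (max n0 n1) (p * p1)"
  proof (rule eperI)
    show "p * p1 > 0" using e(1) by (rule eper_pos)
    fix x assume "x \<ge> max n0 n1"
    then have "x \<in> A \<longleftrightarrow> x + p * p1 \<in> A" "x \<in> B \<longleftrightarrow> x + p * p1 \<in> B" using e eperD by blast+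
    then show "x \<in> A \<inter> B \<longleftrightarrow> x + p * p1 \<in> A \<inter> B" by simp
  qed
  then show ?case by blast
next
  case (union A B)
  then obtain n0 p n1 p1 where "eper A n0 p" "eper B n1 p1" by blast
  from eper_combine[OF this] have e: "eper A (max n0 n1) (p * p1)" "eper B (max n0 n1) (p * p1)" by auto
  have "eper (A \<union> B) (max n0 n1) (p * p1)"
  proof (rule eperI)
    show "p * p1 > 0" using e(1) by (rule eper_pos)
    fix x assume "x \<ge> max n0 n1"
    then have "x \<in> A \<longleftrightarrow> x + p * p1 \<in> A" "x \<in> B \<longleftrightarrow> x + p * p1 \<in> B" using e eperD by blast+
    then show "x \<in> A \<union> B \<longleftrightarrow> x + p * p1 \<in> A \<union> B" by simp
  qed
  then show ?case by blast
qed

lemma eper_list: "\<forall>D\<in>set Ds. semilinear_set D \<Longrightarrow> \<exists>n0 p. p > 0 \<and> (\<forall>D\<in>set Ds. eper D n0 p)"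
proof (induction Ds)
  case Nil show ?case by (intro exI[of _ "0::nat"] exI[of _ "1::nat"]) simp
next
  case (Cons D Ds)
  then obtain n0 p where np: "p > 0" "\<forall>D\<in>set Ds. eper D n0 p" by auto
  have "semilinear_set D" using Cons.prems by simp
  then obtain n1 p1 where n1: "eper D n1 p1" using sl_periodic by blast
  have p1: "p1 > 0" using n1 by (rule eper_pos)
  have "eper D (max n0 n1) (p * p1)"
    using eper_mul[OF n1 np(1)] by (rule eper_mono) simp
  moreover have "\<forall>E\<in>set Ds. eper E (max n0 n1) (p * p1)"
  proof
    fix E assume "E \<in> set Ds"
    then have "eper E n0 p" using np by blast
    from eper_mul[OF this p1] have "eper E n0 (p * p1)" by (simp add: mult.commute)
    then show "eper E (max n0 n1) (p * p1)" by (rule eper_mono) simp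
  qed
  ultimately show ?case using np(1) p1 by (intro exI[of _ "max n0 n1"] exI[of _ "p * p1"]) simp
qed

lemma slf_second_diff:
  fixes f :: "nat \<Rightarrow> nat"
  assumes "semilinear_fun f"
  shows "\<exists>N P. P > 0 \<and> (\<forall>x\<ge>N. f (x + 2 * P) + f x = 2 * f (x + P))"
proof -
  obtain ps :: "(nat set \<times> rat \<times> rat) list" where
    h1: "\<forall>(D, a, b) \<in> set ps. semilinear_set D \<and> (\<forall>x \<in> D. of_nat (f x) = a * of_nat x + b)" and
    h3: "(\<Union>(D, a, b) \<in> set ps. D) = UNIV"
    using assms unfolding semilinear_fun_def by blast
  have "\<forall>D\<in>set (map fst ps). semilinear_set D" using h1 by auto
  from eper_list[OF this] obtain n0 p where np: "p > 0" "\<forall>D\<in>set (map fst ps). eper D n0 p" by blast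
  have "f (x + 2 * p) + f x = 2 * f (x + p)" if x: "x \<ge> n0" for x
  proof -
    obtain D a b where Dab: "(D, a, b) \<in> set ps" "x \<in> D" using h3 by blast
    have ep: "eper D n0 p" using np(2) Dab(1) by force
    have "x + 1 * p \<in> D" using eper_mult[OF ep x] Dab(2) by blast
    moreover have "x + 2 * p \<in> D" using eper_mult[OF ep x] Dab(2) by blast
    ultimately have "x + p \<in> D" by simp
    have aff: "\<forall>y \<in> D. rat_of_nat (f y) = a * of_nat y + b" using h1 Dab(1) by fastforce
    have "rat_of_nat (f (x + 2 * p) + f x) = rat_of_nat (2 * f (x + p))"
      using aff \<open>x + p \<in> D\<close> \<open>x + 2 * p \<in> D\<close> Dab(2) by (simp add: algebra_simps)
    then show ?thesis by (simp only: of_nat_eq_iff)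
  qed
  then show ?thesis using np(1) by blast
qed

lemma lin_const:
  fixes f :: "nat \<Rightarrow> nat"
  assumes sa: "\<forall>x y. f x + f y \<le> f (x + y)" and P: "P > 0"
    and sd: "\<forall>x\<ge>N. f (x + 2 * P) + f x = 2 * f (x + P)"
  shows "\<forall>x\<ge>N. f (x + P) = f x + (f (N + P) - f N)"
proof -
  define s where "s = (\<lambda>x. int (f (x + P)) - int (f x))"
  have sP: "s (x + P) = s x" if "x \<ge> N" for x
  proof -
    have h0: "f (x + 2 * P) + f x = 2 * f (x + P)" using sd that by blast
    then have "int (f (x + 2 * P) + f x) = int (2 * f (x + P))" by (rule arg_cong)
    then have h: "int (f (x + 2 * P)) + int (f x) = 2 * int (f (x + P))" by simp
    have e: "x + P + P = x + 2 * P" by simp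
    show ?thesis unfolding s_def e using h by linarith
  qed
  have sk: "s (x + k * P) = s x" if "x \<ge> N" for x k
  proof (induction k)
    case 0 then show ?case by simp
  next
    case (Suc k)
    have "s (x + Suc k * P) = s ((x + k * P) + P)" by (simp add: algebra_simps)
    also have "\<dots> = s (x + k * P)" using sP that by simp
    finally show ?case using Suc by simp
  qed
  have fk: "int (f (x + k * P)) = int (f x) + int k * s x" if "x \<ge> N" for x k
  proof (induction k)
    case 0 then show ?case by simp
  next
    case (Suc k)
    have "int (f (x + Suc k * P)) = int (f (x + k * P)) + s (x + k * P)"
      unfolding s_def by (simp add: algebra_simps)
    moreover have "s (x + k * P) = s x" using sk[OF that] .
    ultimately show ?case using Suc by (simp add: ring_distribs)
  qed
  have c1: "s x \<le> s (x + y)" if "x \<ge> N" "y \<ge> N" for x y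
  proof (rule ccontr)
    assume "\<not> s x \<le> s (x + y)"
    then have d: "s x - s (x + y) \<ge> 1" by simp
    define k where "k = f (x + y) + 1"
    have "f (x + k * P) + f y \<le> f (x + k * P + y)" using sa by blast
    then have "int (f (x + k * P)) + int (f y) \<le> int (f (x + y + k * P))" by (simp add: algebra_simps)
    then have "int (f x) + int k * s x + int (f y) \<le> int (f (x + y)) + int k * s (x + y)"
      using fk[OF that(1)] fk[of "x + y" k] that by simp
    then have "int k * (s x - s (x + y)) \<le> int (f (x + y))" by (simp add: algebra_simps)
    moreover have "int k * (s x - s (x + y)) \<ge> int k" using d by (simp add: mult_le_cancel_left1)
    ultimately have "int k \<le> int (f (x + y))" by linarith
    then show False unfolding k_def by simp
  qed
  have c2: "s x = s N" if x: "x \<ge> N" for x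
  proof -
    have NP: "N \<le> N * P" "x \<le> x * P" using P by simp_all
    have y1: "x + N * P - N \<ge> N" using x NP by linarith
    have "s N \<le> s (N + (x + N * P - N))" using c1[OF order_refl y1] .
    moreover have "N + (x + N * P - N) = x + N * P" using NP by linarith
    moreover have "s (x + N * P) = s x" using sk[OF x] .
    ultimately have a: "s N \<le> s x" by simp
    have y2: "N + x * P - x \<ge> N" using NP by linarith
    have "s x \<le> s (x + (N + x * P - x))" using c1[OF x y2] .
    moreover have "x + (N + x * P - x) = N + x * P" using NP by linarith
    moreover have "s (N + x * P) = s N" using sk[OF order_refl] .
    ultimately have b: "s x \<le> s N" by simp
    show ?thesis using a b by simp
  qed
  have mono: "f x \<le> f (x + P)" for x using sa by (metis le_add1 le_trans)
  show ?thesis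
  proof (intro allI impI)
    fix x assume x: "x \<ge> N"
    have "s x = s N" using c2[OF x] .
    then show "f (x + P) = f x + (f (N + P) - f N)"
      unfolding s_def using mono[of x] mono[of N] by simp
  qed
qed

definition dl :: "nat \<Rightarrow> config" where "dl a = (\<lambda>s. if s = a then 1 else 0)"

definition lin :: "nat \<Rightarrow> (nat \<Rightarrow> nat) \<Rightarrow> config \<Rightarrow> nat" where
  "lin M w C = (\<Sum>s\<le>M. w s * C s)"

lemma lin_step: "(\<forall>s. r s \<le> C s) \<Longrightarrow> lin M w (\<lambda>s. C s - r s + p s) + lin M w r = lin M w C + lin M w p"
proof -
  assume a: "\<forall>s. r s \<le> C s"
  have "w s * (C s - r s + p s) + w s * r s = w s * C s + w s * p s" for s
  proof -
    have "C s - r s + p s + r s = C s + p s" using a by (metis add.commute add_diff_inverse_nat add.left_commute not_le)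
    then have "w s * (C s - r s + p s + r s) = w s * (C s + p s)" by simp
    then show ?thesis by (simp only: add_mult_distrib2)
  qed
  then show ?thesis unfolding lin_def by (simp add: sum.distrib[symmetric])
qed

lemma lin_add: "lin M w (\<lambda>s. F s + G s) = lin M w F + lin M w G"
  unfolding lin_def by (simp add: add_mult_distrib2 sum.distrib)

lemma lin_mult: "lin M w (\<lambda>s. k * F s) = k * lin M w F"
  unfolding lin_def by (simp add: sum_distrib_left algebra_simps)

lemma lin_dl: "a \<le> M \<Longrightarrow> lin M w (dl a) = w a"
  unfolding lin_def dl_def by (simp add: if_distrib[of "\<lambda>t. w _ * t"] cong: if_cong)

lemma lin_cong: "(\<forall>s\<le>M. w s * C s = w s * C' s) \<Longrightarrow> lin M w C = lin M w C'"
  unfolding lin_def by (intro sum.cong) auto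

lemma lin_zero: "lin M w (\<lambda>_. 0) = 0"
  unfolding lin_def by simp

locale cons =
  fixes f :: "nat \<Rightarrow> nat" and n0 P Dd :: nat
  assumes sa: "\<forall>x y. f x + f y \<le> f (x + y)" and n0: "n0 \<ge> 1" and P: "P > 0"
    and per: "\<forall>x\<ge>n0. f (x + P) = f x + Dd"
begin

definition "M = n0 + P"
definition enc :: "nat \<Rightarrow> nat" where "enc a = (if a < n0 then a else n0 + (a - n0) mod P)"
definition "rX = dl 0"
definition "pX = (\<lambda>s. dl 2 s + f 1 * dl 1 s)"
definition "r2 c1 c2 = (\<lambda>s. dl (c1 + 1) s + dl (c2 + 1) s)"
definition "p2 c1 c2 = (\<lambda>s. dl (enc (c1 + c2) + 1) s + (f (c1 + c2) - f c1 - f c2) * dl 1 s)"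
definition "RR = insert (rX, pX) ((\<lambda>(c1, c2). (r2 c1 c2, p2 c1 c2)) ` ({1..<M} \<times> {1..<M}))"
definition wW :: "nat \<Rightarrow> nat" where "wW s = (if s = 0 then 1 else if 2 \<le> s then s - 1 else 0)"
definition wF :: "nat \<Rightarrow> nat" where "wF s = (if 2 \<le> s then f (s - 1) else 0)"
definition wL :: "nat \<Rightarrow> nat" where "wL s = (if 2 \<le> s then 1 else 0)"

lemma M2: "M \<ge> 2" unfolding M_def using n0 P by simp

lemma f0: "f 0 = 0"
proof -
  have "f 0 + f 0 \<le> f (0 + 0)" using sa by blast
  then show ?thesis by simp
qed

lemma fpt: "u \<ge> n0 \<Longrightarrow> f (u + t * P) = f u + t * Dd"
proof (induction t)
  case 0 then show ?case by simp
next
  case (Suc t)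
  have "f (u + Suc t * P) = f ((u + t * P) + P)" by (simp add: algebra_simps)
  also have "\<dots> = f (u + t * P) + Dd" using per Suc(2) by simp
  finally show ?case using Suc by simp
qed

lemma enc_le: "enc z \<le> z"
  unfolding enc_def by (auto simp: le_diff_conv2[symmetric] intro: mod_le_divisor)
    (metis add.commute le_add_diff_inverse mod_less_eq_dividend nat_add_left_cancel_le not_le)

lemma enc_lt: "enc z < M"
  unfolding enc_def M_def using P n0 by auto

lemma enc_small: "z < n0 \<Longrightarrow> enc z = z" unfolding enc_def by simp
lemma enc_big: "z \<ge> n0 \<Longrightarrow> enc z \<ge> n0" unfolding enc_def by simp
lemma enc_pos: "z \<ge> 1 \<Longrightarrow> enc z \<ge> 1" unfolding enc_def using n0 by auto

lemma enc_dvd: "P dvd (z - enc z)"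
proof (cases "z < n0")
  case True then show ?thesis by (simp add: enc_small)
next
  case False
  then have "z - enc z = (z - n0) - (z - n0) mod P" unfolding enc_def by simp
  then show ?thesis by (simp add: minus_mod_eq_mult_div)
qed

lemma enc_f: "int (f z) * int P = int (f (enc z)) * int P + int Dd * (int z - int (enc z))"
proof -
  obtain t where t: "z - enc z = P * t" using enc_dvd[of z] by (elim dvdE)
  have ze: "z = enc z + t * P" using t enc_le[of z] by (simp add: algebra_simps)
  show ?thesis
  proof (cases "z < n0")
    case True then show ?thesis by (simp add: enc_small)
  next
    case False
    then have "f z = f (enc z) + t * Dd" using fpt[OF enc_big, of z t] ze by simp
    moreover have "int z - int (enc z) = int t * int P"
    proof -
      have "int z = int (enc z + t * P)" using ze by (rule arg_cong)
      then show ?thesis by simp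
    qed
    ultimately show ?thesis by (simp add: algebra_simps)
  qed
qed

lemma enc_eq: "n0 \<le> c \<Longrightarrow> c < M \<Longrightarrow> c \<le> x \<Longrightarrow> P dvd (x - c) \<Longrightarrow> enc x = c"
proof -
  assume a: "n0 \<le> c" "c < M" "c \<le> x" "P dvd (x - c)"
  obtain t where t: "x - c = P * t" using a(4) by (elim dvdE)
  have "x - n0 = (c - n0) + P * t" using a t by simp
  then have "(x - n0) mod P = (c - n0) mod P" by simp
  also have "\<dots> = c - n0" using a(1,2) unfolding M_def by simp
  finally show "enc x = c" unfolding enc_def using a by simp
qed


definition Inv :: "nat \<Rightarrow> config \<Rightarrow> bool" where
  "Inv x C \<longleftrightarrow> (\<forall>s>M. C s = 0) \<and> lin M wW C \<le> x \<and> P dvd (x - lin M wW C) \<and>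
     (lin M wW C = x \<or> (\<exists>c. n0 \<le> c \<and> c < M \<and> C (c + 1) > 0)) \<and>
     int (C 1) * int P = int (lin M wF C) * int P + int Dd * (int x - int (lin M wW C))"

lemma w1: "wW 1 = 0" "wF 1 = 0" "wL 1 = 0" "wW 0 = 1" "wF 0 = 0" "wL 0 = 0" "wW 2 = 1" "wF 2 = f 1" "wL 2 = 1"
  "wW (Suc 0) = 0" "wF (Suc 0) = 0" "wL (Suc 0) = 0"
  unfolding wW_def wF_def wL_def by simp_all

lemma wc: "c \<ge> 1 \<Longrightarrow> wW (c + 1) = c" "c \<ge> 1 \<Longrightarrow> wF (c + 1) = f c" "c \<ge> 1 \<Longrightarrow> wL (c + 1) = 1"
  "c \<ge> 1 \<Longrightarrow> wW (Suc c) = c" "c \<ge> 1 \<Longrightarrow> wF (Suc c) = f c" "c \<ge> 1 \<Longrightarrow> wL (Suc c) = 1"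
  unfolding wW_def wF_def wL_def by simp_all

lemma lin_rX: "lin M w rX = w 0"
  unfolding rX_def by (simp add: lin_dl)

lemma lin_pX: "lin M w pX = w 2 + f 1 * w 1"
  unfolding pX_def using M2 by (simp add: lin_add lin_mult lin_dl)

lemma lin_r2: "c1 < M \<Longrightarrow> c2 < M \<Longrightarrow> lin M w (r2 c1 c2) = w (c1 + 1) + w (c2 + 1)"
  unfolding r2_def by (simp add: lin_add lin_dl)

lemma lin_p2: "lin M w (p2 c1 c2) = w (enc (c1 + c2) + 1) + (f (c1 + c2) - f c1 - f c2) * w 1"
proof -
  have "enc (c1 + c2) + 1 \<le> M" using enc_lt[of "c1 + c2"] by simp
  moreover have "1 \<le> M" using M2 by simp
  ultimately show ?thesis unfolding p2_def by (simp add: lin_add lin_mult lin_dl)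
qed

lemma stepX_inv:
  assumes I: "Inv x C" and le: "\<forall>s. rX s \<le> C s"
  shows "Inv x (\<lambda>s. C s - rX s + pX s)"
proof -
  define D where "D = (\<lambda>s. C s - rX s + pX s)"
  have W: "lin M wW D = lin M wW C" using lin_step[OF le, of M wW pX] unfolding D_def[symmetric]
    by (simp add: lin_rX lin_pX w1)
  have F: "lin M wF D = lin M wF C + f 1" using lin_step[OF le, of M wF pX] unfolding D_def[symmetric]
    by (simp add: lin_rX lin_pX w1)
  have D1: "D 1 = C 1 + f 1" unfolding D_def rX_def pX_def dl_def by simp
  have Dbig: "D s = C s" if "s > M" for s
    using that M2 unfolding D_def rX_def pX_def dl_def by auto
  have Dge: "C (c + 1) \<le> D (c + 1)" for c
    unfolding D_def rX_def pX_def dl_def by simp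
  have "(\<forall>s>M. D s = 0)" using I Dbig unfolding Inv_def by simp
  moreover have "lin M wW D \<le> x \<and> P dvd (x - lin M wW D)" using I W unfolding Inv_def by simp
  moreover have "lin M wW D = x \<or> (\<exists>c. n0 \<le> c \<and> c < M \<and> D (c + 1) > 0)"
    using I W Dge unfolding Inv_def by (meson less_le_trans)
  moreover have "int (D 1) * int P = int (lin M wF D) * int P + int Dd * (int x - int (lin M wW D))"
    using I unfolding Inv_def W F D1 by (simp add: algebra_simps)
  ultimately show ?thesis unfolding Inv_def D_def by blast
qed

lemma step2_inv:
  assumes I: "Inv x C" and c1: "1 \<le> c1" "c1 < M" and c2: "1 \<le> c2" "c2 < M"
    and le: "\<forall>s. r2 c1 c2 s \<le> C s"
  shows "Inv x (\<lambda>s. C s - r2 c1 c2 s + p2 c1 c2 s)"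
proof -
  define D where "D = (\<lambda>s. C s - r2 c1 c2 s + p2 c1 c2 s)"
  define e where "e = enc (c1 + c2)"
  have e: "e \<le> c1 + c2" "e < M" "1 \<le> e" "P dvd (c1 + c2 - e)"
    unfolding e_def using enc_le enc_lt enc_pos enc_dvd c1 c2 by auto
  have sa12: "f c1 + f c2 \<le> f (c1 + c2)" using sa by blast
  have W: "lin M wW D + (c1 + c2) = lin M wW C + e"
    using lin_step[OF le, of M wW "p2 c1 c2"] unfolding D_def[symmetric]
    by (simp add: lin_r2 lin_p2 c1 c2 wc(4)[OF c1(1)] wc(4)[OF c2(1)] wc(4)[OF e(3)] w1 e_def[symmetric])
  have F: "lin M wF D + (f c1 + f c2) = lin M wF C + f e"
    using lin_step[OF le, of M wF "p2 c1 c2"] unfolding D_def[symmetric]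
    by (simp add: lin_r2 lin_p2 c1 c2 wc(5)[OF c1(1)] wc(5)[OF c2(1)] wc(5)[OF e(3)] w1 e_def[symmetric])
  have D1: "D 1 = C 1 + (f (c1 + c2) - f c1 - f c2)"
    unfolding D_def r2_def p2_def dl_def using c1 c2 e(3)[unfolded e_def] by simp
  have Dbig: "D s = C s" if "s > M" for s
    using that c1 c2 e(2) unfolding D_def r2_def p2_def dl_def e_def by auto
  have I1: "\<forall>s>M. C s = 0" and I2: "lin M wW C \<le> x" and I3: "P dvd (x - lin M wW C)"
    and I4: "lin M wW C = x \<or> (\<exists>c. n0 \<le> c \<and> c < M \<and> C (c + 1) > 0)"
    and I5: "int (C 1) * int P = int (lin M wF C) * int P + int Dd * (int x - int (lin M wW C))"
    using I unfolding Inv_def by blast+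
  have "(\<forall>s>M. D s = 0)" using I1 Dbig by simp
  moreover have "lin M wW D \<le> x" using W I2 e(1) by linarith
  moreover have "P dvd (x - lin M wW D)"
  proof -
    have "x - lin M wW D = (x - lin M wW C) + (c1 + c2 - e)" using W I2 e(1) by linarith
    then show ?thesis using I3 e(4) by simp
  qed
  moreover have "lin M wW D = x \<or> (\<exists>c. n0 \<le> c \<and> c < M \<and> D (c + 1) > 0)"
  proof (cases "c1 + c2 < n0")
    case True
    then have ee: "e = c1 + c2" unfolding e_def by (rule enc_small)
    then have WD: "lin M wW D = lin M wW C" using W by simp
    show ?thesis
    proof (cases "lin M wW C = x")
      case True then show ?thesis using WD by simp
    next
      case False
      then obtain c where c: "n0 \<le> c" "c < M" "C (c + 1) > 0" using I4 by blast
      have "r2 c1 c2 (c + 1) = 0" unfolding r2_def dl_def using c(1) True by auto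
      then have "D (c + 1) > 0" using c(3) unfolding D_def by simp
      then show ?thesis using c by blast
    qed
  next
    case False
    then have "n0 \<le> e" unfolding e_def by (intro enc_big) simp
    moreover have "D (e + 1) > 0" unfolding D_def p2_def dl_def e_def by simp
    ultimately show ?thesis using e(2) by blast
  qed
  moreover have "int (D 1) * int P = int (lin M wF D) * int P + int Dd * (int x - int (lin M wW D))"
  proof -
    have ef: "int (f (c1 + c2)) * int P = int (f e) * int P + int Dd * (int (c1 + c2) - int e)"
      using enc_f[of "c1 + c2"] unfolding e_def .
    have d1: "int (D 1) = int (C 1) + int (f (c1 + c2)) - int (f c1) - int (f c2)"
      using D1 sa12 by simp
    have wd: "int (lin M wW D) = int (lin M wW C) + int e - int c1 - int c2"
      using W by linarith
    have fd: "int (lin M wF D) = int (lin M wF C) + int (f e) - int (f c1) - int (f c2)"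
      using F by linarith
    show ?thesis using I5 ef unfolding d1 wd fd of_nat_add
      by (simp only: left_diff_distrib right_diff_distrib distrib_left distrib_right)
  qed
  ultimately show ?thesis unfolding Inv_def D_def by blast
qed


lemma RR_cases:
  assumes "(r, p) \<in> RR"
  obtains "r = rX" "p = pX"
  | c1 c2 where "1 \<le> c1" "c1 < M" "1 \<le> c2" "c2 < M" "r = r2 c1 c2" "p = p2 c1 c2"
  using assms unfolding RR_def by auto

lemma step_inv: "crn_step RR C D \<Longrightarrow> Inv x C \<Longrightarrow> Inv x D"
proof -
  assume st: "crn_step RR C D" and I: "Inv x C"
  from st obtain r p where rp: "(r, p) \<in> RR" "\<forall>s. r s \<le> C s" "D = (\<lambda>s. C s - r s + p s)"
    unfolding crn_step_def by auto
  from rp(1) show "Inv x D"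
  proof (cases rule: RR_cases)
    case 1
    then show ?thesis using stepX_inv[OF I] rp by simp
  next
    case (2 c1 c2)
    then show ?thesis using step2_inv[OF I 2(1-4)] rp by simp
  qed
qed

lemma init_inv: "Inv x (init_config 0 x)"
proof -
  have ic: "init_config 0 x = (\<lambda>s. x * dl 0 s)" unfolding init_config_def dl_def by auto
  have "lin M w (init_config 0 x) = x * w 0" for w unfolding ic by (simp add: lin_mult lin_dl)
  then show ?thesis unfolding Inv_def using M2 by (simp add: w1 init_config_def)
qed

lemma reach_inv: "reachable RR (init_config 0 x) C \<Longrightarrow> Inv x C"
  unfolding reachable_def
proof (induction rule: rtranclp_induct)
  case base then show ?case by (rule init_inv)
next
  case (step y z) then show ?case using step_inv by blast
qed

lemma progress: "Inv x C \<Longrightarrow> \<exists>Ot. reachable RR C Ot \<and> stable_config RR 1 Ot \<and> Ot 1 = f x"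
proof (induction "2 * C 0 + lin M wL C" arbitrary: C rule: less_induct)
  case less
  note I = less.prems
  show ?case
  proof (cases "C 0 > 0")
    case True
    define D where "D = (\<lambda>s. C s - rX s + pX s)"
    have le: "\<forall>s. rX s \<le> C s" unfolding rX_def dl_def using True by auto
    have stp: "crn_step RR C D" unfolding crn_step_def RR_def D_def using le by auto
    have ID: "Inv x D" unfolding D_def by (rule stepX_inv[OF I le])
    have L: "lin M wL D + 0 = lin M wL C + 1" using lin_step[OF le, of M wL pX] unfolding D_def[symmetric]
      by (simp add: lin_rX lin_pX w1)
    have D0: "D 0 = C 0 - 1" unfolding D_def rX_def pX_def dl_def by simp
    have "2 * D 0 + lin M wL D < 2 * C 0 + lin M wL C" using L D0 True by simp
    from less.hyps[OF this ID] obtain Ot where "reachable RR D Ot" "stable_config RR 1 Ot" "Ot 1 = f x"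
      by blast
    moreover have "reachable RR C D" using stp unfolding reachable_def by auto
    ultimately show ?thesis using reach_trans by blast
  next
    case False
    then have C0: "C 0 = 0" by simp
    show ?thesis
    proof (cases "\<exists>c1 c2. 1 \<le> c1 \<and> c1 < M \<and> 1 \<le> c2 \<and> c2 < M \<and> (\<forall>s. r2 c1 c2 s \<le> C s)")
      case True
      then obtain c1 c2 where c: "1 \<le> c1" "c1 < M" "1 \<le> c2" "c2 < M" and le: "\<forall>s. r2 c1 c2 s \<le> C s"
        by blast
      define D where "D = (\<lambda>s. C s - r2 c1 c2 s + p2 c1 c2 s)"
      have inR: "(r2 c1 c2, p2 c1 c2) \<in> RR" unfolding RR_def using c by auto
      have stp: "crn_step RR C D" unfolding crn_step_def D_def
        by (rule bexI[OF _ inR]) (simp add: le)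
      have ID: "Inv x D" unfolding D_def by (rule step2_inv[OF I c le])
      have e1: "1 \<le> enc (c1 + c2)" using enc_pos c by simp
      have L: "lin M wL D + 2 = lin M wL C + 1" using lin_step[OF le, of M wL "p2 c1 c2"] unfolding D_def[symmetric]
        by (simp add: lin_r2 lin_p2 c wc(6)[OF c(1)] wc(6)[OF c(3)] wc(6)[OF e1] w1)
      have D0: "D 0 = C 0" unfolding D_def r2_def p2_def dl_def by simp
      have "2 * D 0 + lin M wL D < 2 * C 0 + lin M wL C" using L D0 by simp
      from less.hyps[OF this ID] obtain Ot where "reachable RR D Ot" "stable_config RR 1 Ot" "Ot 1 = f x"
        by blast
      moreover have "reachable RR C D" using stp unfolding reachable_def by auto
      ultimately show ?thesis using reach_trans by blast
    next
      case False
      then have NR: "\<And>c1 c2. 1 \<le> c1 \<Longrightarrow> c1 < M \<Longrightarrow> 1 \<le> c2 \<Longrightarrow> c2 < M \<Longrightarrow> \<not> (\<forall>s. r2 c1 c2 s \<le> C s)"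
        by blast
      have nostep: "\<not> crn_step RR C D" for D
      proof
        assume "crn_step RR C D"
        then obtain r p where rp: "(r, p) \<in> RR" "\<forall>s. r s \<le> C s" unfolding crn_step_def by auto
        from rp(1) show False
        proof (cases rule: RR_cases)
          case 1 then show False using rp(2) C0 unfolding rX_def dl_def by (metis le_zero_eq one_neq_zero)
        next
          case (2 c1 c2) then show False using NR rp(2) by blast
        qed
      qed
      have stab: "stable_config RR 1 C"
        unfolding stable_config_def
      proof (intro allI impI)
        fix D assume "reachable RR C D"
        then have "D = C" unfolding reachable_def
          by (cases rule: converse_rtranclpE) (use nostep in auto)
        then show "D 1 = C 1" by simp
      qed
      have le1: "C (c + 1) \<le> 1" if "1 \<le> c" "c < M" for c
      proof (rule ccontr)
        assume "\<not> C (c + 1) \<le> 1"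
        then have "\<forall>s. r2 c c s \<le> C s" unfolding r2_def dl_def by auto
        then show False using NR that by blast
      qed
      have uniq: "C (c' + 1) = 0" if "1 \<le> c" "c < M" "1 \<le> c'" "c' < M" "c \<noteq> c'" "C (c + 1) > 0" for c c'
      proof (rule ccontr)
        assume "C (c' + 1) \<noteq> 0"
        then have "\<forall>s. r2 c c' s \<le> C s" unfolding r2_def dl_def using that(5,6) by auto
        then show False using NR that by blast
      qed
      have I1: "lin M wW C \<le> x" and I3: "P dvd (x - lin M wW C)"
        and I4: "lin M wW C = x \<or> (\<exists>c. n0 \<le> c \<and> c < M \<and> C (c + 1) > 0)"
        and I5: "int (C 1) * int P = int (lin M wF C) * int P + int Dd * (int x - int (lin M wW C))"
        using I unfolding Inv_def by blast+
      have "C 1 = f x"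
      proof (cases "\<exists>c. 1 \<le> c \<and> c < M \<and> C (c + 1) > 0")
        case False
        have z: "w s * C s = w s * 0" if "s \<le> M" "w 1 = 0" for s and w :: "nat \<Rightarrow> nat"
        proof -
          consider "s = 0" | "s = 1" | "s \<ge> 2" by linarith
          then show ?thesis
          proof cases
            case 3
            have "1 \<le> s - 1" "s - 1 < M" using 3 that(1) M2 by linarith+
            have "C ((s - 1) + 1) = 0"
            proof (rule ccontr)
              assume "C ((s - 1) + 1) \<noteq> 0"
              then have "1 \<le> s - 1 \<and> s - 1 < M \<and> C ((s - 1) + 1) > 0" using \<open>1 \<le> s - 1\<close> \<open>s - 1 < M\<close> by simp
              then have "\<exists>c. 1 \<le> c \<and> c < M \<and> C (c + 1) > 0" by (rule exI)
              with False show False by (rule notE)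
            qed
            then show ?thesis using 3 by simp
          qed (use C0 that in auto)
        qed
        have "lin M wW C = 0" "lin M wF C = 0"
          using lin_cong[of M wW C "\<lambda>_. 0"] lin_cong[of M wF C "\<lambda>_. 0"] z w1 by (auto simp: lin_zero)
        moreover have "x = 0" using I4 False n0 \<open>lin M wW C = 0\<close> by (metis le_trans)
        ultimately show ?thesis using I5 P f0 by simp
      next
        case True
        then obtain c where c: "1 \<le> c" "c < M" "C (c + 1) > 0" by blast
        have one: "C (c + 1) = 1" using le1[OF c(1,2)] c(3) by simp
        have z: "w s * C s = w s * dl (c + 1) s" if "s \<le> M" "w 1 = 0" for s and w :: "nat \<Rightarrow> nat"
        proof -
          consider "s = 0" | "s = 1" | "s \<ge> 2" by linarith
          then show ?thesis
          proof cases
            case 3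
            show ?thesis
            proof (cases "s = c + 1")
              case True then show ?thesis using one by (simp add: dl_def)
            next
              case False
              have "C ((s - 1) + 1) = 0" using uniq[OF c(1,2), of "s - 1"] c 3 that(1) False by simp
              then show ?thesis using 3 False by (simp add: dl_def)
            qed
          qed (use C0 that in \<open>auto simp: dl_def\<close>)
        qed
        have W: "lin M wW C = c" using lin_cong[of M wW C "dl (c + 1)"] z w1 lin_dl[of "c + 1" M wW] wc(1)[OF c(1)] c(2)
          by simp
        have F: "lin M wF C = f c" using lin_cong[of M wF C "dl (c + 1)"] z w1 lin_dl[of "c + 1" M wF] wc(2)[OF c(1)] c(2)
          by simp
        show ?thesis
        proof (cases "c = x")
          case True
          then show ?thesis using I5 W F P by simp
        next
          case False
          then obtain c' where c': "n0 \<le> c'" "c' < M" "C (c' + 1) > 0" using I4 W by auto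
          have "c' = c" using uniq[OF c(1,2), of c'] c' n0 c(3) by fastforce
          then have ex: "enc x = c" using enc_eq[of c x] c' I1 I3 W by simp
          have "int (f x) * int P = int (f c) * int P + int Dd * (int x - int c)" using enc_f[of x] ex by simp
          then have "int (C 1) * int P = int (f x) * int P" using I5 W F by simp
          then show ?thesis using P by simp
        qed
      qed
      then show ?thesis using stab reach_refl by blast
    qed
  qed
qed


lemma valid: "valid_crn {..M} RR"
proof -
  have "finite RR" unfolding RR_def by simp
  moreover have "\<forall>(r, p) \<in> RR. \<forall>s. s \<notin> {..M} \<longrightarrow> r s = 0 \<and> p s = 0"
  proof (rule ballI)
    fix z assume z: "z \<in> RR"
    obtain r p where zrp: "z = (r, p)" by fastforce
    have "r s = 0 \<and> p s = 0" if s: "s \<notin> {..M}" for s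
    proof -
      have sM: "s > M" using s by simp
      from z[unfolded zrp] show "r s = 0 \<and> p s = 0"
      proof (cases rule: RR_cases)
        case 1 then show ?thesis using sM M2 unfolding rX_def pX_def dl_def by auto
      next
        case (2 c1 c2)
        have "enc (c1 + c2) < M" by (rule enc_lt)
        then show ?thesis using 2 sM M2 unfolding r2_def p2_def dl_def by auto
      qed
    qed
    then show "case z of (r, p) \<Rightarrow> \<forall>s. s \<notin> {..M} \<longrightarrow> r s = 0 \<and> p s = 0" unfolding zrp by simp
  qed
  ultimately show ?thesis unfolding valid_crn_def by blast
qed

lemma oblivious: "output_oblivious RR 1"
  unfolding output_oblivious_def
proof
  fix z assume z: "z \<in> RR"
  obtain r p where zrp: "z = (r, p)" by fastforce
  from z[unfolded zrp] have "r 1 = 0"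
  proof (cases rule: RR_cases)
    case 1 then show ?thesis unfolding rX_def dl_def by simp
  next
    case (2 c1 c2) then show ?thesis unfolding r2_def dl_def by auto
  qed
  then show "case z of (r, p) \<Rightarrow> r 1 = 0" using zrp by simp
qed

lemma computes: "stably_computes RR 0 1 f"
  unfolding stably_computes_def using reach_inv progress reach_trans by blast

lemma oc: "obliviously_computable f"
  unfolding obliviously_computable_def
  using valid oblivious computes M2 by (intro exI[of _ "{..M}"] exI[of _ RR] exI[of _ 0] exI[of _ 1]) auto

end

lemma backward:
  fixes f :: "nat \<Rightarrow> nat"
  assumes sl: "semilinear_fun f" and sup: "superadditive f"
  shows "obliviously_computable f"
proof -
  have sa: "\<forall>x y. f x + f y \<le> f (x + y)" using sup unfolding superadditive_def by blast
  obtain N P where P: "P > 0" and sd: "\<forall>x\<ge>N. f (x + 2 * P) + f x = 2 * f (x + P)"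
    using slf_second_diff[OF sl] by blast
  have per: "\<forall>x\<ge>N. f (x + P) = f x + (f (N + P) - f N)" using lin_const[OF sa P sd] .
  have per': "\<forall>x\<ge>max N 1. f (x + P) = f x + (f (N + P) - f N)"
  proof (intro allI impI)
    fix x assume "max N 1 \<le> x"
    then have "N \<le> x" by simp
    then show "f (x + P) = f x + (f (N + P) - f N)" using per by blast
  qed
  interpret cons f "max N 1" P "f (N + P) - f N"
    by unfold_locales (fact sa, simp, fact P, fact per')
  show ?thesis by (rule oc)
qed

theorem theorem39:
  fixes f :: "nat \<Rightarrow> nat"
  shows "obliviously_computable f \<longleftrightarrow> semilinear_fun f \<and> superadditive f"
  using forward backward by blast

end
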